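(* Let $n\ge 2$, let $G=P_n$ be a path all of whose edges have weight $p\in(0,1)$, and let $\alpha\in(0,1)$. Then $\operatorname{cptw}(G,\alpha)$ is the minimum value of $m$ for which \[\sum_{s=n-1}^{m}\binom{m}{s}p^s(1-p)^{m-s}\ \ge\ \alpha.\]
   Context: Let $G$ be a finite simple graph in which each edge $uv$ has a weight $w_{uv}\in(0,1)$. Weighted zero forcing: start with a set $B\subseteq V(G)$ of blue vertices, all other vertices white. In each round, simultaneously, for every blue vertex $u$ that has exactly one white neighbor $v$ (with respect to the coloring at the start of the round), $u$ attempts to force $v$, succeeding with probability $w_{uv}$, all attempts being independent; a white vertex becomes blue at the end of the round if at least one attempt on it succeeds. $B$ is a weighted zero forcing set of $G$ if this process can eventually color all of $V(G)$ blue (equivalently, $B$ is a zero forcing set of the underlying unweighted graph under the standard rule); $\operatorname{Z}(G)$ is the minimum size of such a set. $\operatorname{ptw}(G,B)$ is the random variable giving the round in which the last white vertex becomes blue ($0$ if $B=V(G)$). For $\alpha\in(0,1)$, $\operatorname{cptw}(G,B,\alpha)$ is the least $t\ge 0$ with $\Pr(\operatorname{ptw}(G,B)\le t)\ge\alpha$, and $\operatorname{cptw}(G,\alpha)$ is the minimum of $\operatorname{cptw}(G,B,\alpha)$ over weighted zero forcing sets $B$ with $|B|=\operatorname{Z}(G)$. *)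

theory Defs
  imports "HOL-Probability.Probability"
begin

(* A finite simple graph is given by a finite vertex set V and a symmetric,
   irreflexive adjacency relation E; edge weights by w :: 'a => 'a => real
   (only the values w u v on edges uv matter). *)

inductive_set zf_closure :: "'a set \<Rightarrow> ('a \<Rightarrow> 'a \<Rightarrow> bool) \<Rightarrow> 'a set \<Rightarrow> 'a set"
  for V E B where
  base: "b \<in> B \<Longrightarrow> b \<in> zf_closure V E B"
| force: "\<lbrakk>u \<in> zf_closure V E B; v \<in> V; E u v;
           \<forall>x\<in>V. E u x \<and> x \<noteq> v \<longrightarrow> x \<in> zf_closure V E B\<rbrakk>
          \<Longrightarrow> v \<in> zf_closure V E B"

definition zero_forcing_set :: "'a set \<Rightarrow> ('a \<Rightarrow> 'a \<Rightarrow> bool) \<Rightarrow> 'a set \<Rightarrow> bool" where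
  "zero_forcing_set V E B \<longleftrightarrow> B \<subseteq> V \<and> V \<subseteq> zf_closure V E B"

definition Z_num :: "'a set \<Rightarrow> ('a \<Rightarrow> 'a \<Rightarrow> bool) \<Rightarrow> nat" where
  "Z_num V E = Min (card ` {B. zero_forcing_set V E B})"

definition force_attempts :: "'a set \<Rightarrow> ('a \<Rightarrow> 'a \<Rightarrow> bool) \<Rightarrow> 'a set \<Rightarrow> ('a \<times> 'a) set" where
  "force_attempts V E S =
     {(u, v). u \<in> S \<and> v \<in> V \<and> v \<notin> S \<and> E u v \<and>
              (\<forall>x\<in>V. E u x \<and> x \<notin> S \<longrightarrow> x = v)}"

definition wzf_step :: "'a set \<Rightarrow> ('a \<Rightarrow> 'a \<Rightarrow> bool) \<Rightarrow> ('a \<Rightarrow> 'a \<Rightarrow> real) \<Rightarrow> 'a set \<Rightarrow> 'a set pmf" where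
  "wzf_step V E w S =
     map_pmf (\<lambda>f. S \<union> {v. \<exists>u. (u, v) \<in> force_attempts V E S \<and> f (u, v)})
       (Pi_pmf (force_attempts V E S) False (\<lambda>(u, v). bernoulli_pmf (w u v)))"

primrec wzf_dist :: "'a set \<Rightarrow> ('a \<Rightarrow> 'a \<Rightarrow> bool) \<Rightarrow> ('a \<Rightarrow> 'a \<Rightarrow> real) \<Rightarrow> 'a set \<Rightarrow> nat \<Rightarrow> 'a set pmf" where
  "wzf_dist V E w B 0 = return_pmf B"
| "wzf_dist V E w B (Suc t) = bind_pmf (wzf_dist V E w B t) (wzf_step V E w)"

definition prob_ptw_le :: "'a set \<Rightarrow> ('a \<Rightarrow> 'a \<Rightarrow> bool) \<Rightarrow> ('a \<Rightarrow> 'a \<Rightarrow> real) \<Rightarrow> 'a set \<Rightarrow> nat \<Rightarrow> real" where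
  "prob_ptw_le V E w B t = measure_pmf.prob (wzf_dist V E w B t) {V}"

definition cptw_set :: "'a set \<Rightarrow> ('a \<Rightarrow> 'a \<Rightarrow> bool) \<Rightarrow> ('a \<Rightarrow> 'a \<Rightarrow> real) \<Rightarrow> 'a set \<Rightarrow> real \<Rightarrow> nat" where
  "cptw_set V E w B \<alpha> = (LEAST t. prob_ptw_le V E w B t \<ge> \<alpha>)"

definition cptw :: "'a set \<Rightarrow> ('a \<Rightarrow> 'a \<Rightarrow> bool) \<Rightarrow> ('a \<Rightarrow> 'a \<Rightarrow> real) \<Rightarrow> real \<Rightarrow> nat" where
  "cptw V E w \<alpha> =
     Min ((\<lambda>B. cptw_set V E w B \<alpha>) ` {B. zero_forcing_set V E B \<and> card B = Z_num V E})"

definition path_V :: "nat \<Rightarrow> nat set" where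
  "path_V n = {..<n}"

definition path_E :: "nat \<Rightarrow> nat \<Rightarrow> bool" where
  "path_E i j \<longleftrightarrow> j = Suc i \<or> i = Suc j"

end

theory Submission
  imports Defs
begin


lemma chain_dist:
  fixes S :: "nat \<Rightarrow> 'a set"
  assumes fa: "\<And>k. k < N \<Longrightarrow> force_attempts V E (S k) = {(a k, b k)}"
    and ins: "\<And>k. k < N \<Longrightarrow> S (Suc k) = insert (b k) (S k)"
    and faN: "force_attempts V E (S N) = {}"
    and wp: "\<And>k. k < N \<Longrightarrow> w (a k) (b k) = p"
    and p: "0 \<le> p" "p \<le> 1"
  shows "wzf_dist V E w (S 0) t = map_pmf (\<lambda>j. S (min j N)) (binomial_pmf t p)"
proof (induction t)
  case 0
  then show ?case using p by (simp add: binomial_pmf_0)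
next
  case (Suc t)
  have step: "wzf_step V E w (S (min j N)) = map_pmf (\<lambda>x. S (min ((if x then 1 else 0) + j) N)) (bernoulli_pmf p)" for j
  proof (cases "j < N")
    case True
    have "wzf_step V E w (S (min j N)) = map_pmf (\<lambda>f. S j \<union> {v. \<exists>u. (u, v) \<in> {(a j, b j)} \<and> f (u, v)})
       (map_pmf (\<lambda>x y. if y = (a j, b j) then x else False) (bernoulli_pmf (w (a j) (b j))))"
      unfolding wzf_step_def using True fa[OF True] by (simp add: Pi_pmf_singleton)
    also have "\<dots> = map_pmf (\<lambda>x. S (min ((if x then 1 else 0) + j) N)) (bernoulli_pmf p)"
      unfolding pmf.map_comp o_def using True wp[OF True] ins[OF True]
      by (intro map_pmf_cong) (auto simp: Suc_le_eq)
    finally show ?thesis .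
  next
    case False
    then have "min j N = N" "\<And>x. min ((if x then 1 else 0) + j) N = N" by auto
    then show ?thesis unfolding wzf_step_def using faN by (simp add: map_pmf_const)
  qed
  have "wzf_dist V E w (S 0) (Suc t) = bind_pmf (binomial_pmf t p) (\<lambda>j. wzf_step V E w (S (min j N)))"
    using Suc by (simp add: bind_map_pmf)
  also have "\<dots> = bind_pmf (binomial_pmf t p) (\<lambda>j. bind_pmf (bernoulli_pmf p) (\<lambda>x. return_pmf (S (min ((if x then 1 else 0) + j) N))))"
    by (simp add: step map_pmf_def)
  also have "\<dots> = bind_pmf (bernoulli_pmf p) (\<lambda>x. bind_pmf (binomial_pmf t p) (\<lambda>j. return_pmf (S (min ((if x then 1 else 0) + j) N))))"
    by (rule bind_commute_pmf)
  also have "\<dots> = map_pmf (\<lambda>j. S (min j N)) (binomial_pmf (Suc t) p)"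
    using p by (simp add: binomial_pmf_Suc map_pmf_def bind_assoc_pmf bind_return_pmf)
  finally show ?case .
qed



lemma fa_mem: "(u, v) \<in> force_attempts V E S \<longleftrightarrow> u \<in> S \<and> v \<in> V \<and> v \<notin> S \<and> E u v \<and>
              (\<forall>x\<in>V. E u x \<and> x \<notin> S \<longrightarrow> x = v)"
  unfolding force_attempts_def by simp

lemma fa_left:
  assumes "k < n - 1"
  shows "force_attempts (path_V n) path_E {..k} = {(k, Suc k)}"
proof (rule set_eqI, clarify)
  fix u v
  show "((u, v) \<in> force_attempts (path_V n) path_E {..k}) = ((u, v) \<in> {(k, Suc k)})"
  proof
    assume "(u, v) \<in> force_attempts (path_V n) path_E {..k}"
    then have "u \<le> k" "\<not> v \<le> k" "v = Suc u \<or> u = Suc v"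
      unfolding fa_mem path_E_def atMost_iff by blast+
    then show "(u, v) \<in> {(k, Suc k)}" by auto
  next
    assume "(u, v) \<in> {(k, Suc k)}"
    then show "(u, v) \<in> force_attempts (path_V n) path_E {..k}"
    proof -
      have uv: "u = k" "v = Suc k" using \<open>(u, v) \<in> {(k, Suc k)}\<close> by auto
      have "\<forall>x\<in>path_V n. path_E k x \<and> x \<notin> {..k} \<longrightarrow> x = Suc k"
        unfolding path_E_def by auto
      moreover have "Suc k \<in> path_V n" using assms unfolding path_V_def by simp
      ultimately show ?thesis unfolding fa_mem uv path_E_def by simp
    qed
  qed
qed
lemma fa_right:
  assumes "k < n - 1"
  shows "force_attempts (path_V n) path_E {n-1-k..<n} = {(n-1-k, n-2-k)}"
proof (rule set_eqI, clarify)
  fix u v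
  show "((u, v) \<in> force_attempts (path_V n) path_E {n-1-k..<n}) = ((u, v) \<in> {(n-1-k, n-2-k)})"
  proof
    assume "(u, v) \<in> force_attempts (path_V n) path_E {n-1-k..<n}"
    then have "n-1-k \<le> u" "u < n" "v < n" "\<not> (n-1-k \<le> v \<and> v < n)" "v = Suc u \<or> u = Suc v"
      unfolding fa_mem path_E_def atLeastLessThan_iff path_V_def lessThan_iff by blast+
    then show "(u, v) \<in> {(n-1-k, n-2-k)}" by auto
  next
    assume "(u, v) \<in> {(n-1-k, n-2-k)}"
    then show "(u, v) \<in> force_attempts (path_V n) path_E {n-1-k..<n}"
    proof -
      have uv: "u = n-1-k" "v = n-2-k" using \<open>(u, v) \<in> {(n-1-k, n-2-k)}\<close> by auto
      have "\<forall>x\<in>path_V n. path_E (n-1-k) x \<and> x \<notin> {n-1-k..<n} \<longrightarrow> x = n-2-k"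
        unfolding path_E_def path_V_def using assms by auto
      moreover have "n-2-k \<in> path_V n" "n-2-k \<notin> {n-1-k..<n}" "n-1-k \<in> {n-1-k..<n}" "path_E (n-1-k) (n-2-k)"
        using assms unfolding path_V_def path_E_def by auto
      ultimately show ?thesis unfolding fa_mem uv by blast
    qed
  qed
qed


lemma faV: "force_attempts V E V = {}"
  unfolding force_attempts_def by auto

lemma prob_binom:
  assumes "0 < p" "p < 1"
  shows "measure_pmf.prob (binomial_pmf t p) {j. N \<le> j} = (\<Sum>s = N..t. real (t choose s) * p ^ s * (1 - p) ^ (t - s))"
proof -
  have "measure_pmf.prob (binomial_pmf t p) {j. N \<le> j} = measure_pmf.prob (binomial_pmf t p) ({j. N \<le> j} \<inter> set_pmf (binomial_pmf t p))"
    by (simp add: measure_Int_set_pmf)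
  also have "{j. N \<le> j} \<inter> set_pmf (binomial_pmf t p) = {N..t}" using assms by auto
  finally show ?thesis using assms by (simp add: measure_measure_pmf_finite pmf_binomial)
qed

lemma prob_chain:
  assumes "0 < p" "p < 1" and "\<And>j. (S (min j N) = V) = (N \<le> j)"
  and "wzf_dist V E w B t = map_pmf (\<lambda>j. S (min j N)) (binomial_pmf t p)"
  shows "prob_ptw_le V E w B t = (\<Sum>s = N..t. real (t choose s) * p ^ s * (1 - p) ^ (t - s))"
proof -
  have "prob_ptw_le V E w B t = measure_pmf.prob (binomial_pmf t p) ((\<lambda>j. S (min j N)) -` {V})"
    unfolding prob_ptw_le_def assms(4) by simp
  also have "(\<lambda>j. S (min j N)) -` {V} = {j. N \<le> j}" using assms(3) by auto
  finally show ?thesis using prob_binom[OF assms(1,2)] by simp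
qed


lemma prob_left:
  assumes "n \<ge> 2" "0 < p" "p < 1"
  shows "prob_ptw_le (path_V n) path_E (\<lambda>_ _. p) {0} t = (\<Sum>s = n-1..t. real (t choose s) * p ^ s * (1 - p) ^ (t - s))"
proof -
  have d: "wzf_dist (path_V n) path_E (\<lambda>_ _. p) ((\<lambda>k. {..k}) 0) t = map_pmf (\<lambda>j. (\<lambda>k. {..k}) (min j (n-1))) (binomial_pmf t p)"
  proof (rule chain_dist[where a="\<lambda>k. k" and b=Suc])
    show "force_attempts (path_V n) path_E {..k} = {(k, Suc k)}" if "k < n - 1" for k
      using fa_left[OF that] .
    show "{..Suc k} = insert (Suc k) {..k}" for k by auto
    have "{..n-1} = path_V n" unfolding path_V_def using assms by auto
    then show "force_attempts (path_V n) path_E {..n-1} = {}" using faV by simp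
  qed (use assms in auto)
  have e: "({..min j (n-1)} = path_V n) = (n - 1 \<le> j)" for j
  proof
    assume h: "{..min j (n-1)} = path_V n"
    have "n - 1 \<in> path_V n" using assms unfolding path_V_def by simp
    then have "n - 1 \<le> min j (n-1)" using h by blast
    then show "n - 1 \<le> j" by simp
  next
    assume "n - 1 \<le> j"
    then have "min j (n-1) = n - 1" by simp
    then show "{..min j (n-1)} = path_V n" unfolding path_V_def using assms by auto
  qed
  have "wzf_dist (path_V n) path_E (\<lambda>_ _. p) {0} t = map_pmf (\<lambda>j. {..min j (n-1)}) (binomial_pmf t p)"
    using d by simp
  from prob_chain[where S="\<lambda>k. {..k}", OF assms(2,3) e this] show ?thesis .
qed

lemma prob_right:
  assumes "n \<ge> 2" "0 < p" "p < 1"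
  shows "prob_ptw_le (path_V n) path_E (\<lambda>_ _. p) {n-1} t = (\<Sum>s = n-1..t. real (t choose s) * p ^ s * (1 - p) ^ (t - s))"
proof -
  have d: "wzf_dist (path_V n) path_E (\<lambda>_ _. p) ((\<lambda>k. {n-1-k..<n}) 0) t = map_pmf (\<lambda>j. (\<lambda>k. {n-1-k..<n}) (min j (n-1))) (binomial_pmf t p)"
  proof (rule chain_dist[where a="\<lambda>k. n-1-k" and b="\<lambda>k. n-2-k"])
    show "force_attempts (path_V n) path_E {n-1-k..<n} = {(n-1-k, n-2-k)}" if "k < n - 1" for k
      using fa_right[OF that] .
    show "{n-1-Suc k..<n} = insert (n-2-k) {n-1-k..<n}" if "k < n - 1" for k
      using that by (auto simp: set_eq_iff)
    have "{n-1-(n-1)..<n} = path_V n" unfolding path_V_def by auto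
    then show "force_attempts (path_V n) path_E {n-1-(n-1)..<n} = {}" using faV by simp
  qed (use assms in auto)
  have e: "({n-1-min j (n-1)..<n} = path_V n) = (n - 1 \<le> j)" for j
  proof
    assume h: "{n-1-min j (n-1)..<n} = path_V n"
    have "0 \<in> path_V n" using assms unfolding path_V_def by simp
    then have "0 \<in> {n-1-min j (n-1)..<n}" using h by simp
    then have "n - 1 - min j (n-1) \<le> 0" by simp
    then show "n - 1 \<le> j" by simp
  next
    assume "n - 1 \<le> j"
    then have "min j (n-1) = n - 1" by simp
    then show "{n-1-min j (n-1)..<n} = path_V n" unfolding path_V_def by auto
  qed
  have "{n-1-0..<n} = {n-1}" using assms by auto
  then have "wzf_dist (path_V n) path_E (\<lambda>_ _. p) {n-1} t = map_pmf (\<lambda>j. {n-1-min j (n-1)..<n}) (binomial_pmf t p)"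
    using d by simp
  from prob_chain[where S="\<lambda>k. {n-1-k..<n}", OF assms(2,3) e this] show ?thesis .
qed


lemma closure_empty: "x \<in> zf_closure V E {} \<Longrightarrow> False"
  by (induction rule: zf_closure.induct) auto

lemma closure_mid:
  assumes "0 < b" "b < n - 1"
  shows "x \<in> zf_closure (path_V n) path_E {b} \<Longrightarrow> x = b"
proof (induction rule: zf_closure.induct)
  case (base x) then show ?case by simp
next
  case (force u v)
  have u: "u = b" using force by simp
  have "b - 1 \<in> path_V n" "Suc b \<in> path_V n" "path_E b (b-1)" "path_E b (Suc b)" "b - 1 \<noteq> b" "Suc b \<noteq> b" "b - 1 \<noteq> Suc b"
    using assms unfolding path_V_def path_E_def by auto
  then have "b - 1 \<in> zf_closure (path_V n) path_E {b} \<and> b - 1 = b \<or> Suc b \<in> zf_closure (path_V n) path_E {b} \<and> Suc b = b"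
    using force u by blast
  then show ?case using assms by linarith
qed

lemma closure_left:
  assumes "k < n"
  shows "k \<in> zf_closure (path_V n) path_E {0}"
  using assms
proof (induction k rule: less_induct)
  case (less k)
  show ?case
  proof (cases k)
    case 0 then show ?thesis by (simp add: zf_closure.base)
  next
    case (Suc j)
    show ?thesis
    proof (rule zf_closure.force[where u=j])
      show "j \<in> zf_closure (path_V n) path_E {0}" using less Suc by simp
      show "k \<in> path_V n" using less unfolding path_V_def by simp
      show "path_E j k" using Suc unfolding path_E_def by simp
      show "\<forall>x\<in>path_V n. path_E j x \<and> x \<noteq> k \<longrightarrow> x \<in> zf_closure (path_V n) path_E {0}"
      proof (intro ballI impI)
        fix x assume "x \<in> path_V n" "path_E j x \<and> x \<noteq> k"
        then have "x < k" using Suc unfolding path_E_def by auto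
        then show "x \<in> zf_closure (path_V n) path_E {0}" using less by simp
      qed
    qed
  qed
qed

lemma zfs_left: "n \<ge> 2 \<Longrightarrow> zero_forcing_set (path_V n) path_E {0}"
  unfolding zero_forcing_set_def using closure_left by (auto simp: path_V_def)

lemma Z_path: assumes "n \<ge> 2" shows "Z_num (path_V n) path_E = 1"
  unfolding Z_num_def
proof (rule Min_eqI)
  have "card ` {B. zero_forcing_set (path_V n) path_E B} \<subseteq> card ` Pow (path_V n)"
    unfolding zero_forcing_set_def by auto
  then show "finite (card ` {B. zero_forcing_set (path_V n) path_E B})"
    by (rule finite_subset) (simp add: path_V_def)
  show "1 \<in> card ` {B. zero_forcing_set (path_V n) path_E B}"
    using zfs_left[OF assms] by force
  fix y assume "y \<in> card ` {B. zero_forcing_set (path_V n) path_E B}"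
  then obtain B where B: "zero_forcing_set (path_V n) path_E B" "y = card B" by auto
  have fin: "finite B" using B(1) unfolding zero_forcing_set_def path_V_def
    using finite_subset by blast
  have "B \<noteq> {}"
  proof
    assume "B = {}"
    moreover have "0 \<in> zf_closure (path_V n) path_E B" using B(1) assms
      unfolding zero_forcing_set_def path_V_def by auto
    ultimately show False using closure_empty[of 0 "path_V n" path_E] by simp
  qed
  then show "1 \<le> y" using B fin by (simp add: Suc_le_eq card_gt_0_iff)
qed

lemma min_sets:
  assumes "n \<ge> 2" "zero_forcing_set (path_V n) path_E B" "card B = 1"
  shows "B = {0} \<or> B = {n-1}"
proof -
  obtain b where b: "B = {b}" using assms(3) card_1_singletonE by blast
  have bn: "b < n" using assms(2) b unfolding zero_forcing_set_def path_V_def by auto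
  show ?thesis
  proof (rule ccontr)
    assume "\<not> ?thesis"
    then have "0 < b" "b < n - 1" using b bn by auto
    moreover have "0 \<in> zf_closure (path_V n) path_E {b}" using assms(2) b assms(1)
      unfolding zero_forcing_set_def path_V_def by auto
    ultimately show False using closure_mid by blast
  qed
qed

theorem mainTheorem9:
  fixes n :: nat and p \<alpha> :: real
  assumes "n \<ge> 2" and "0 < p" and "p < 1" and "0 < \<alpha>" and "\<alpha> < 1"
  shows "cptw (path_V n) path_E (\<lambda>_ _. p) \<alpha> =
           (LEAST m::nat. (\<Sum>s = n - 1..m. real (m choose s) * p ^ s * (1 - p) ^ (m - s)) \<ge> \<alpha>)"
proof -
  let ?L = "(LEAST m::nat. (\<Sum>s = n - 1..m. real (m choose s) * p ^ s * (1 - p) ^ (m - s)) \<ge> \<alpha>)"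
  let ?Bs = "{B. zero_forcing_set (path_V n) path_E B \<and> card B = Z_num (path_V n) path_E}"
  have each: "cptw_set (path_V n) path_E (\<lambda>_ _. p) B \<alpha> = ?L" if "B \<in> ?Bs" for B
  proof -
    have "B = {0} \<or> B = {n-1}" using that min_sets[OF assms(1)] Z_path[OF assms(1)] by auto
    then have "prob_ptw_le (path_V n) path_E (\<lambda>_ _. p) B t = (\<Sum>s = n-1..t. real (t choose s) * p ^ s * (1 - p) ^ (t - s))" for t
      using prob_left[OF assms(1-3)] prob_right[OF assms(1-3)] by auto
    then show ?thesis unfolding cptw_set_def by simp
  qed
  have "{0} \<in> ?Bs" using zfs_left[OF assms(1)] Z_path[OF assms(1)] by simp
  have "(\<lambda>B. cptw_set (path_V n) path_E (\<lambda>_ _. p) B \<alpha>) ` ?Bs = {?L}"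
  proof (rule set_eqI, rule iffI)
    fix x assume "x \<in> (\<lambda>B. cptw_set (path_V n) path_E (\<lambda>_ _. p) B \<alpha>) ` ?Bs"
    then obtain B where "B \<in> ?Bs" "x = cptw_set (path_V n) path_E (\<lambda>_ _. p) B \<alpha>" by blast
    then show "x \<in> {?L}" using each by simp
  next
    fix x assume "x \<in> {?L}"
    then have "x = cptw_set (path_V n) path_E (\<lambda>_ _. p) {0} \<alpha>" using each[OF \<open>{0} \<in> ?Bs\<close>] by simp
    then show "x \<in> (\<lambda>B. cptw_set (path_V n) path_E (\<lambda>_ _. p) B \<alpha>) ` ?Bs" using \<open>{0} \<in> ?Bs\<close> by blast
  qed
  then show ?thesis unfolding cptw_def by simp
qed

end
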